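(* Let $k$ be algebraically closed of characteristic $0$ and $n,m\ge0$. Let $\mathfrak M_{n,m}$ be the set of $n\times m$ matrices over $\mathbf F$, and consider $k[\mathfrak M_{n,m}]$ (the vector space with basis $[X]$, $X\in\mathfrak M_{n,m}$) with the left $k[\mathfrak M_n]$-action $[a][X]=[aX]$ and the commuting right $k[\mathfrak M_m]$-action $[X][b]=[Xb]$. Then the images of $k[\mathfrak M_n]$ and of $k[\mathfrak M_m]$ in $\operatorname{End}_k(k[\mathfrak M_{n,m}])$ are each other's centralizers.
   Context: $\mathbf F$ is a finite field with $q$ elements and $\mathfrak M_n$ denotes the monoid of $n\times n$ matrices over $\mathbf F$ with monoid algebra $k[\mathfrak M_n]$. Note $k[\mathfrak M_{n,m}]\cong V^{\otimes m}$ for $V=k[\mathbf F^n]$. *)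

theory Defs
  imports "HOL-Computational_Algebra.Polynomial"
begin

definition alg_closed :: "'k::field itself \<Rightarrow> bool" where
  "alg_closed _ \<longleftrightarrow> (\<forall>p::'k poly. degree p \<ge> 1 \<longrightarrow> (\<exists>x. poly p x = 0))"

type_synonym 'f fmat = "nat \<Rightarrow> nat \<Rightarrow> 'f"

definition mats :: "nat \<Rightarrow> nat \<Rightarrow> ('f::zero) fmat set" where
  "mats n m = {A. \<forall>i j. (i \<ge> n \<or> j \<ge> m) \<longrightarrow> A i j = 0}"

definition mmul :: "nat \<Rightarrow> ('f::comm_semiring_0) fmat \<Rightarrow> 'f fmat \<Rightarrow> 'f fmat" where
  "mmul l A B = (\<lambda>i j. \<Sum>t<l. A i t * B t j)"

(* k-endomorphisms of k[M_{n,m}], represented by their matrices w.r.t. the basis [X], X in M_{n,m}: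
   E Y X is the coefficient of [Y] in E [X]. *)
definition endos :: "nat \<Rightarrow> nat \<Rightarrow> ('f::field fmat \<Rightarrow> 'f fmat \<Rightarrow> 'k::field) set" where
  "endos n m = {E. \<forall>Y X. (Y \<notin> mats n m \<or> X \<notin> mats n m) \<longrightarrow> E Y X = 0}"

definition ecomp :: "nat \<Rightarrow> nat \<Rightarrow> ('f::field fmat \<Rightarrow> 'f fmat \<Rightarrow> 'k::field)
    \<Rightarrow> ('f fmat \<Rightarrow> 'f fmat \<Rightarrow> 'k) \<Rightarrow> ('f fmat \<Rightarrow> 'f fmat \<Rightarrow> 'k)" where
  "ecomp n m E G = (\<lambda>Y X. \<Sum>Z\<in>mats n m. E Y Z * G Z X)"

definition lact :: "nat \<Rightarrow> nat \<Rightarrow> 'f::field fmat \<Rightarrow> ('f fmat \<Rightarrow> 'f fmat \<Rightarrow> 'k::field)" where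
  "lact n m a = (\<lambda>Y X. if X \<in> mats n m \<and> Y \<in> mats n m \<and> mmul n a X = Y then 1 else 0)"

definition ract :: "nat \<Rightarrow> nat \<Rightarrow> 'f::field fmat \<Rightarrow> ('f fmat \<Rightarrow> 'f fmat \<Rightarrow> 'k::field)" where
  "ract n m b = (\<lambda>Y X. if X \<in> mats n m \<and> Y \<in> mats n m \<and> mmul m X b = Y then 1 else 0)"

definition left_image :: "nat \<Rightarrow> nat \<Rightarrow> ('f::field fmat \<Rightarrow> 'f fmat \<Rightarrow> 'k::field) set" where
  "left_image n m = {(\<lambda>Y X. \<Sum>a\<in>mats n n. c a * lact n m a Y X) | c. True}"

definition right_image :: "nat \<Rightarrow> nat \<Rightarrow> ('f::field fmat \<Rightarrow> 'f fmat \<Rightarrow> 'k::field) set" where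
  "right_image n m = {(\<lambda>Y X. \<Sum>b\<in>mats m m. c b * ract n m b Y X) | c. True}"

definition centralizer :: "nat \<Rightarrow> nat \<Rightarrow> ('f::field fmat \<Rightarrow> 'f fmat \<Rightarrow> 'k::field) set
    \<Rightarrow> ('f fmat \<Rightarrow> 'f fmat \<Rightarrow> 'k) set" where
  "centralizer n m S = {E \<in> endos n m. \<forall>G\<in>S. ecomp n m E G = ecomp n m G E}"

end

theory Submission
  imports Defs "HOL-Number_Theory.Cong" "HOL-Computational_Algebra.Primes"
begin

lemma char_prime_f: "prime CHAR('f::{finite,field})"
  by (simp add: finite_imp_CHAR_pos prime_CHAR_semidom)

definition addsub :: "'a::ring_1 set \<Rightarrow> bool" where
  "addsub H \<longleftrightarrow> 0 \<in> H \<and> (\<forall>a\<in>H. \<forall>b\<in>H. a + b \<in> H)"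

lemma addsub_nat_mult: "addsub H \<Longrightarrow> h \<in> H \<Longrightarrow> of_nat k * h \<in> H"
  by (induction k) (auto simp: addsub_def algebra_simps)

lemma addsub_neg:
  fixes H :: "'f::{finite,field} set"
  assumes "addsub H" "h \<in> H" shows "- h \<in> H"
proof -
  let ?p = "CHAR('f)"
  have p0: "?p > 0" using char_prime_f[where 'f='f] prime_gt_0_nat by blast
  then obtain k where k: "?p = Suc k" by (cases "?p") auto
  have "of_nat k * h + h = of_nat ?p * h" unfolding k by (simp add: algebra_simps)
  also have "\<dots> = 0" by simp
  finally have "of_nat k * h = - h" by (simp add: add_eq_0_iff2)
  thus ?thesis using addsub_nat_mult[OF assms, of k] by simp
qed

lemma addsub_diff:
  fixes H :: "'f::{finite,field} set"
  assumes "addsub H" "a \<in> H" "b \<in> H" shows "a - b \<in> H"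
  using addsub_neg[OF assms(1,3)] assms unfolding addsub_def
  by (metis diff_conv_add_uminus)

lemma exists_max_addsub:
  "\<exists>H::'f::{finite,field} set. addsub H \<and> 1 \<notin> H \<and>
     (\<forall>H'. addsub H' \<and> 1 \<notin> H' \<and> H \<subseteq> H' \<longrightarrow> H' = H)"
proof -
  let ?S = "{H::'f set. addsub H \<and> 1 \<notin> H}"
  have fin: "finite ?S" by (rule finite_subset[of _ "Pow UNIV"]) auto
  have "{0} \<in> ?S" by (auto simp: addsub_def)
  hence ne: "card ` ?S \<noteq> {}" by blast
  have "Max (card ` ?S) \<in> card ` ?S" using fin ne by (intro Max_in) auto
  then obtain H where H: "H \<in> ?S" "card H = Max (card ` ?S)" by auto
  have "H' = H" if "addsub H'" "1 \<notin> H'" "H \<subseteq> H'" for H'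
  proof (rule ccontr)
    assume "H' \<noteq> H"
    hence "H \<subset> H'" using that by auto
    hence "card H < card H'" by (intro psubset_card_mono) auto
    moreover have "card H' \<le> Max (card ` ?S)" using fin that by (intro Max_ge) auto
    ultimately show False using H by simp
  qed
  thus ?thesis using H by blast
qed

lemma char_unit_mod:
  fixes j :: nat
  assumes "\<not> CHAR('f::{finite,field}) dvd j"
  obtains u where "of_nat u * of_nat j = (1::'f)"
proof -
  let ?p = "CHAR('f)"
  have "coprime j ?p" using char_prime_f[where 'f='f] assms
    by (metis coprime_commute prime_imp_coprime)
  then obtain u where "[j * u = Suc 0] (mod ?p)" using cong_solve_coprime_nat by blast
  hence "of_nat (j * u) = (of_nat (Suc 0) :: 'f)" using of_nat_eq_iff_cong_CHAR by blast
  hence "of_nat u * of_nat j = (1::'f)" by (simp add: mult.commute)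
  thus ?thesis using that by blast
qed

lemma idx_exists:
  fixes H :: "'f::{finite,field} set"
  assumes Hs: "addsub H" "1 \<notin> H" and Hmax: "\<forall>H'. addsub H' \<and> 1 \<notin> H' \<and> H \<subseteq> H' \<longrightarrow> H' = H"
  shows "\<exists>i<CHAR('f). x - of_nat i \<in> H"
proof (cases "x \<in> H")
  case True
  have "CHAR('f) > 0" using char_prime_f[where 'f='f] prime_gt_0_nat by blast
  thus ?thesis using True by (intro exI[of _ 0]) auto
next
  case False
  let ?p = "CHAR('f)"
  define H' where "H' = {h + of_nat j * x | h j. h \<in> H}"
  have "addsub H'" unfolding addsub_def H'_def
  proof (intro conjI ballI)
    show "0 \<in> {h + of_nat j * x |h j. h \<in> H}"
      using Hs by (auto simp: addsub_def intro!: exI[of _ 0])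
    fix a b assume "a \<in> {h + of_nat j * x |h j. h \<in> H}" "b \<in> {h + of_nat j * x |h j. h \<in> H}"
    then obtain h1 j1 h2 j2 where "a = h1 + of_nat j1 * x" "b = h2 + of_nat j2 * x" "h1 \<in> H" "h2 \<in> H"
      by auto
    thus "a + b \<in> {h + of_nat j * x |h j. h \<in> H}"
      using Hs unfolding addsub_def
      by (intro CollectI exI[of _ "h1 + h2"] exI[of _ "j1 + j2"]) (auto simp: algebra_simps)
  qed
  moreover have "H \<subseteq> H'" unfolding H'_def by (force intro: exI[of _ 0])
  moreover have "x \<in> H'"
  proof -
    have "x = 0 + of_nat 1 * x" "(0::'f) \<in> H" using Hs by (auto simp: addsub_def)
    thus ?thesis unfolding H'_def by blast
  qed
  ultimately have "1 \<in> H'" using Hmax False by blast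
  then obtain h j where hj: "1 = h + of_nat j * x" "h \<in> H" unfolding H'_def by auto
  have "\<not> ?p dvd j"
  proof
    assume "?p dvd j"
    hence "(of_nat j :: 'f) = 0" by (simp add: of_nat_eq_0_iff_char_dvd)
    thus False using hj Hs by simp
  qed
  then obtain u where u: "of_nat u * of_nat j = (1::'f)" by (rule char_unit_mod)
  have "x = of_nat u * (of_nat j * x)" using u by (simp add: mult.assoc[symmetric])
  also have "of_nat j * x = 1 - h" using hj by (simp add: algebra_simps)
  finally have "x - of_nat u = - (of_nat u * h)" by (simp add: algebra_simps)
  also have "\<dots> \<in> H" using addsub_neg[OF Hs(1)] addsub_nat_mult[OF Hs(1) hj(2)] by blast
  finally have xu: "x - of_nat u \<in> H" .
  have "(of_nat u :: 'f) = of_nat (u mod ?p)"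
    by (simp add: of_nat_eq_iff_cong_CHAR cong_def)
  moreover have "u mod ?p < ?p" using char_prime_f[where 'f='f] prime_gt_0_nat by auto
  ultimately show ?thesis using xu by metis
qed

lemma idx_unique:
  fixes H :: "'f::{finite,field} set"
  assumes Hs: "addsub H" "1 \<notin> H"
  assumes "i < CHAR('f)" "i' < CHAR('f)" "x - of_nat i \<in> H" "x - of_nat i' \<in> H"
  shows "i = i'"
proof -
  have key: False if "a < b" "b < CHAR('f)" "x - of_nat a \<in> H" "x - of_nat b \<in> H" for a b
  proof -
    have "(x - of_nat a) - (x - of_nat b) \<in> H" using addsub_diff[OF Hs(1)] that by blast
    hence "of_nat (b - a) \<in> H" using that by (simp add: of_nat_diff)
    moreover have "\<not> CHAR('f) dvd (b - a)"
    proof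
      assume "CHAR('f) dvd (b - a)"
      hence "CHAR('f) \<le> b - a" using that by (intro dvd_imp_le) auto
      thus False using that by linarith
    qed
    then obtain u where "of_nat u * of_nat (b - a) = (1::'f)" by (rule char_unit_mod)
    ultimately show False using addsub_nat_mult[OF Hs(1)] Hs(2) by metis
  qed
  show ?thesis
  proof (rule ccontr)
    assume "i \<noteq> i'"
    hence "i < i' \<or> i' < i" by linarith
    thus False using key[of i i'] key[of i' i] assms by blast
  qed
qed

lemma exists_root_unity:
  assumes ac: "alg_closed TYPE('k::field_char_0)" and p: "p \<ge> 2"
  shows "\<exists>z::'k. z ^ p = 1 \<and> z \<noteq> 1"
proof -
  define Q :: "'k poly" where "Q = (\<Sum>i<p. monom 1 i)"
  have "coeff Q 1 = (\<Sum>i<p. if i = 1 then 1 else 0)"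
    unfolding Q_def by (simp add: coeff_sum coeff_monom)
  also have "\<dots> = 1" using p by simp
  finally have "1 \<le> degree Q" by (intro le_degree) simp
  then obtain z where z: "poly Q z = 0" using ac unfolding alg_closed_def by blast
  have pz: "poly Q z = (\<Sum>i<p. z ^ i)" unfolding Q_def by (simp add: poly_sum poly_monom)
  have "z \<noteq> 1"
  proof
    assume "z = 1"
    hence "poly Q z = of_nat p" using pz by simp
    thus False using z p by simp
  qed
  moreover have "z ^ p = 1"
    using z pz sum_gp_strict[of z p] \<open>z \<noteq> 1\<close> by (auto simp: divide_eq_0_iff)
  ultimately show ?thesis by blast
qed

lemma exists_char:
  assumes ac: "alg_closed TYPE('k::field_char_0)"
  shows "\<exists>\<psi>::'f::{finite,field} \<Rightarrow> 'k. (\<forall>x y. \<psi> (x + y) = \<psi> x * \<psi> y) \<and> \<psi> 0 = 1 \<and> (\<exists>t. \<psi> t \<noteq> 1)"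
proof -
  let ?p = "CHAR('f)"
  have pp: "prime ?p" by (rule char_prime_f)
  hence p2: "?p \<ge> 2" by (simp add: prime_ge_2_nat)
  obtain z :: 'k where z: "z ^ ?p = 1" "z \<noteq> 1" using exists_root_unity[OF ac p2] by blast
  obtain H :: "'f set" where Hs: "addsub H" "1 \<notin> H"
    and Hmax: "\<forall>H'. addsub H' \<and> 1 \<notin> H' \<and> H \<subseteq> H' \<longrightarrow> H' = H"
    using exists_max_addsub by blast
  define idx where "idx x = (THE i. i < ?p \<and> x - of_nat i \<in> H)" for x :: 'f
  have idx: "idx x < ?p \<and> x - of_nat (idx x) \<in> H" for x
  proof -
    obtain i where i: "i < ?p" "x - of_nat i \<in> H" using idx_exists[OF Hs Hmax] by blast
    have "idx x = i" unfolding idx_def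
      using i idx_unique[OF Hs] by (intro the_equality) blast+
    thus ?thesis using i by simp
  qed
  have idx_eq: "idx x = i" if "i < ?p" "x - of_nat i \<in> H" for x i
    using idx[of x] idx_unique[OF Hs] that by blast
  have zmod: "z ^ n = z ^ (n mod ?p)" for n
  proof -
    have "z ^ n = z ^ (?p * (n div ?p)) * z ^ (n mod ?p)"
      by (metis div_mult_mod_eq power_add mult.commute)
    moreover have "z ^ (?p * (n div ?p)) = 1" by (simp add: power_mult z(1))
    ultimately show ?thesis by simp
  qed
  define \<psi> where "\<psi> x = z ^ idx x" for x
  have hom: "\<psi> (x + y) = \<psi> x * \<psi> y" for x y
  proof -
    have e: "(of_nat ((idx x + idx y) mod ?p) :: 'f) = of_nat (idx x) + of_nat (idx y)"
      using of_nat_eq_iff_cong_CHAR[where 'a='f, of "idx x + idx y" "(idx x + idx y) mod ?p"]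
      by (simp add: cong_def)
    have "(x + y) - of_nat ((idx x + idx y) mod ?p) = (x - of_nat (idx x)) + (y - of_nat (idx y))"
      by (simp only: e) (simp add: algebra_simps)
    moreover have "(x - of_nat (idx x)) + (y - of_nat (idx y)) \<in> H"
      using idx[of x] idx[of y] Hs(1) unfolding addsub_def by blast
    ultimately have "(x + y) - of_nat ((idx x + idx y) mod ?p) \<in> H" by metis
    hence "idx (x + y) = (idx x + idx y) mod ?p"
      using p2 by (intro idx_eq) auto
    hence "\<psi> (x + y) = z ^ ((idx x + idx y) mod ?p)" by (simp add: \<psi>_def)
    also have "\<dots> = z ^ (idx x + idx y)" using zmod[of "idx x + idx y"] by simp
    also have "\<dots> = \<psi> x * \<psi> y" by (simp add: \<psi>_def power_add)
    finally show ?thesis .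
  qed
  have "idx 0 = 0" using p2 Hs by (intro idx_eq) (auto simp: addsub_def)
  hence "\<psi> 0 = 1" by (simp add: \<psi>_def)
  moreover have "idx 1 = 1" using p2 Hs by (intro idx_eq) (auto simp: addsub_def)
  hence "\<psi> 1 \<noteq> 1" using z by (simp add: \<psi>_def)
  ultimately show ?thesis using hom by blast
qed

definition tr2 :: "nat \<Rightarrow> nat \<Rightarrow> 'f::comm_semiring_0 fmat \<Rightarrow> 'f fmat \<Rightarrow> 'f" where
  "tr2 l r B Z = (\<Sum>i<l. \<Sum>j<r. B i j * Z j i)"

lemma mats_iff: "A \<in> mats n m \<longleftrightarrow> (\<forall>i j. (i \<ge> n \<or> j \<ge> m) \<longrightarrow> A i j = 0)"
  by (simp add: mats_def)

lemma finite_mats: "finite (mats n m :: 'f::{finite,zero} fmat set)"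
proof -
  let ?R = "{r :: nat \<Rightarrow> 'f. \<forall>j. (j \<in> {..<m} \<longrightarrow> r j \<in> UNIV) \<and> (j \<notin> {..<m} \<longrightarrow> r j = 0)}"
  have fR: "finite ?R" by (rule finite_set_of_finite_funs) auto
  have "finite {A :: 'f fmat. \<forall>i. (i \<in> {..<n} \<longrightarrow> A i \<in> ?R) \<and> (i \<notin> {..<n} \<longrightarrow> A i = (\<lambda>j. 0))}"
    by (rule finite_set_of_finite_funs) (use fR in auto)
  moreover have "mats n m \<subseteq> {A :: 'f fmat. \<forall>i. (i \<in> {..<n} \<longrightarrow> A i \<in> ?R) \<and> (i \<notin> {..<n} \<longrightarrow> A i = (\<lambda>j. 0))}"
    by (auto simp: mats_def)
  ultimately show ?thesis by (rule finite_subset[rotated])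
qed

lemma zero_mats [simp]: "(\<lambda>_ _. 0) \<in> mats n m"
  by (simp add: mats_def)

lemma mats_ne: "mats n m \<noteq> {}"
  using zero_mats by blast

lemma mmul_mats: "A \<in> mats r l \<Longrightarrow> B \<in> mats l c \<Longrightarrow> mmul l A B \<in> mats r c"
  by (auto simp: mats_def mmul_def)

lemma mmul_assoc: "mmul l2 (mmul l1 A B) C = mmul l1 A (mmul l2 B C)"
  unfolding mmul_def
  by (intro ext) (simp add: sum_distrib_left sum_distrib_right mult.assoc; rule sum.swap)

lemma tr2_assoc: "tr2 l r (mmul k A B) C = tr2 l k A (mmul r B C)"
  unfolding tr2_def mmul_def
proof (rule sum.cong[OF refl])
  fix i assume "i \<in> {..<l}"
  show "(\<Sum>j<r. (\<Sum>t<k. A i t * B t j) * C j i) = (\<Sum>t<k. A i t * (\<Sum>j<r. B t j * C j i))"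
    by (simp add: sum_distrib_left sum_distrib_right mult.assoc) (rule sum.swap)
qed

lemma tr2_sym: "tr2 l r B Z = tr2 r l Z B"
  unfolding tr2_def by (subst sum.swap) (simp add: mult.commute)

lemma tr2_add_left: "tr2 l r (\<lambda>i j. B i j + D i j) Z = tr2 l r B Z + tr2 l r D Z"
  unfolding tr2_def by (simp add: distrib_right sum.distrib)

lemma tr2_diff_left: "tr2 l r (\<lambda>i j. B i j - D i j) (Z::'f::comm_ring fmat) = tr2 l r B Z - tr2 l r D Z"
  unfolding tr2_def by (simp add: left_diff_distrib sum_subtractf)

lemma tr2_diff_right: "tr2 l r B (\<lambda>i j. Y i j - Y0 i j) = tr2 l r B (Y::'f::comm_ring fmat) - tr2 l r B Y0"
  unfolding tr2_def by (simp add: right_diff_distrib sum_subtractf)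

lemma tr2_zero_right [simp]: "tr2 l r B (\<lambda>_ _. 0) = 0"
  unfolding tr2_def by simp

lemma card_mats_pos: "card (mats n m :: 'f::{finite,zero} fmat set) > 0"
  by (simp add: card_gt_0_iff finite_mats mats_ne)

locale addchar =
  fixes \<psi> :: "'f::{finite,field} \<Rightarrow> 'k::field_char_0"
  assumes psi_add: "\<psi> (x + y) = \<psi> x * \<psi> y"
    and psi_0: "\<psi> 0 = 1"
    and psi_nt: "\<exists>t. \<psi> t \<noteq> 1"
begin

lemma psi_neg: "\<psi> (- x) * \<psi> x = 1"
  using psi_add[of "-x" x] psi_0 by simp

lemma psi_diff: "\<psi> (x - y) = \<psi> x * \<psi> (- y)"
  using psi_add[of x "-y"] by simp

lemma orth:
  assumes Z: "Z \<in> mats r l"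
  shows "(\<Sum>B\<in>mats l r. \<psi> (tr2 l r B Z)) = (if Z = (\<lambda>_ _. 0) then of_nat (card (mats l r :: 'f fmat set)) else 0)"
proof (cases "Z = (\<lambda>_ _. 0)")
  case True
  thus ?thesis by (simp add: psi_0)
next
  case False
  then obtain j0 i0 where nz: "Z j0 i0 \<noteq> 0" by (metis ext)
  hence ji: "j0 < r" "i0 < l" using Z by (auto simp: mats_def not_less[symmetric])
  obtain t0 where t0: "\<psi> t0 \<noteq> 1" using psi_nt by blast
  define t where "t = t0 / Z j0 i0"
  define D where "D = (\<lambda>i j. if i = i0 \<and> j = j0 then t else (0::'f))"
  have Dm: "D \<in> mats l r" using ji by (auto simp: mats_def D_def)
  have inner: "(\<Sum>j<r. D i j * Z j i) = (if i = i0 then t * Z j0 i else 0)" for i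
  proof (cases "i = i0")
    case True
    have "(\<Sum>j<r. D i j * Z j i) = (\<Sum>j<r. if j = j0 then t * Z j0 i else 0)"
      by (intro sum.cong refl) (simp add: D_def True)
    also have "\<dots> = t * Z j0 i" using ji by simp
    finally show ?thesis using True by simp
  next
    case False
    thus ?thesis by (simp add: D_def)
  qed
  have trD: "tr2 l r D Z = t0"
  proof -
    have "tr2 l r D Z = (\<Sum>i<l. if i = i0 then t * Z j0 i else 0)"
      unfolding tr2_def using inner by simp
    also have "\<dots> = t * Z j0 i0" using ji by simp
    finally show ?thesis using nz by (simp add: t_def)
  qed
  define h where "h B = (\<lambda>i j. B i j + D i j)" for B :: "'f fmat"
  have bij: "bij_betw h (mats l r) (mats l r)"
  proof (rule bij_betw_byWitness[where f'="\<lambda>B i j. B i j - D i j"])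
    show "\<forall>a\<in>mats l r. (\<lambda>i j. h a i j - D i j) = a" by (simp add: h_def)
    show "\<forall>a\<in>mats l r. h (\<lambda>i j. a i j - D i j) = a" by (simp add: h_def)
    show "h ` mats l r \<subseteq> mats l r" using Dm by (auto simp: h_def mats_def)
    show "(\<lambda>B i j. B i j - D i j) ` mats l r \<subseteq> mats l r" using Dm by (auto simp: mats_def)
  qed
  let ?S = "\<Sum>B\<in>mats l r. \<psi> (tr2 l r B Z)"
  have "?S = (\<Sum>B\<in>mats l r. \<psi> (tr2 l r (h B) Z))"
    using sum.reindex_bij_betw[OF bij, of "\<lambda>B. \<psi> (tr2 l r B Z)"] by simp
  also have "\<dots> = (\<Sum>B\<in>mats l r. \<psi> t0 * \<psi> (tr2 l r B Z))"
    by (intro sum.cong refl) (simp add: h_def tr2_add_left trD psi_add mult.commute)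
  also have "\<dots> = \<psi> t0 * ?S" by (simp add: sum_distrib_left)
  finally have "(1 - \<psi> t0) * ?S = 0" by (simp add: algebra_simps)
  hence "?S = 0" using t0 by simp
  thus ?thesis using False by simp
qed

lemma orth_right:
  assumes Z: "Z \<in> mats r l"
  shows "(\<Sum>B\<in>mats l r. \<psi> (tr2 r l Z B)) = (if Z = (\<lambda>_ _. 0) then of_nat (card (mats l r :: 'f fmat set)) else 0)"
  using orth[OF Z] by (simp add: tr2_sym)

lemma fourier_inj:
  fixes g :: "'f fmat \<Rightarrow> 'k"
  assumes H: "\<And>B. B \<in> mats m n \<Longrightarrow> (\<Sum>Y\<in>mats n m. g Y * \<psi> (tr2 m n B Y)) = 0"
    and Y0: "Y0 \<in> mats n m"
  shows "g Y0 = 0"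
proof -
  let ?N = "of_nat (card (mats m n :: 'f fmat set)) :: 'k"
  have "0 = (\<Sum>B\<in>mats m n. \<psi> (- tr2 m n B Y0) * (\<Sum>Y\<in>mats n m. g Y * \<psi> (tr2 m n B Y)))"
    using H by simp
  also have "\<dots> = (\<Sum>B\<in>mats m n. \<Sum>Y\<in>mats n m. g Y * \<psi> (tr2 m n B (\<lambda>i j. Y i j - Y0 i j)))"
    by (intro sum.cong refl)
       (simp add: sum_distrib_left tr2_diff_right psi_diff mult.commute mult.left_commute)
  also have "\<dots> = (\<Sum>Y\<in>mats n m. g Y * (\<Sum>B\<in>mats m n. \<psi> (tr2 m n B (\<lambda>i j. Y i j - Y0 i j))))"
    by (subst sum.swap) (simp add: sum_distrib_left)
  also have "\<dots> = (\<Sum>Y\<in>mats n m. if Y = Y0 then g Y * ?N else 0)"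
  proof (intro sum.cong refl)
    fix Y :: "'f fmat" assume Y: "Y \<in> mats n m"
    have Ym: "(\<lambda>i j. Y i j - Y0 i j) \<in> mats n m" using Y Y0 by (auto simp: mats_def)
    have eq: "((\<lambda>i j. Y i j - Y0 i j) = (\<lambda>_ _. 0)) \<longleftrightarrow> Y = Y0"
      by (auto simp: fun_eq_iff)
    show "g Y * (\<Sum>B\<in>mats m n. \<psi> (tr2 m n B (\<lambda>i j. Y i j - Y0 i j))) = (if Y = Y0 then g Y * ?N else 0)"
      using orth[OF Ym] eq by simp
  qed
  also have "\<dots> = g Y0 * ?N" using Y0 by (simp add: finite_mats)
  finally have "g Y0 * ?N = 0" by simp
  moreover have "?N \<noteq> 0" using card_mats_pos[where 'f='f, of m n] by simp
  ultimately show ?thesis by simp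
qed

end

lemma swap_helper:
  "(\<Sum>t<r. (\<Sum>u<c. a u * g u t) * h t) = (\<Sum>u<c. a u * (\<Sum>t<r. g u t * (h t::'a::comm_semiring_0)))"
proof -
  have "(\<Sum>t<r. (\<Sum>u<c. a u * g u t) * h t) = (\<Sum>t<r. \<Sum>u<c. a u * (g u t * h t))"
    by (simp add: sum_distrib_right mult.assoc)
  also have "\<dots> = (\<Sum>u<c. \<Sum>t<r. a u * (g u t * h t))" by (rule sum.swap)
  also have "\<dots> = (\<Sum>u<c. a u * (\<Sum>t<r. g u t * h t))" by (simp add: sum_distrib_left)
  finally show ?thesis .
qed

lemma gen_inverse:
  "B \<in> mats r c \<Longrightarrow> \<exists>G\<in>mats c r. mmul r (mmul c B G) B = (B::'f::field fmat)"
proof (induction r arbitrary: B)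
  case 0
  hence "B = (\<lambda>_ _. 0)" by (auto simp: mats_def)
  thus ?case by (intro bexI[of _ "\<lambda>_ _. 0"]) (auto simp: mmul_def)
next
  case (Suc r)
  note Bm = Suc.prems
  define B' where "B' = (\<lambda>i j. if i < r then B i j else 0)"
  have B'm: "B' \<in> mats r c" using Bm by (auto simp: mats_def B'_def)
  obtain G' where G'm: "G' \<in> mats c r" and G'inv: "mmul r (mmul c B' G') B' = B'"
    using Suc.IH[OF B'm] by blast
  define P where "P = mmul r G' B'"
  define \<beta>' where "\<beta>' j = B r j - (\<Sum>u<c. B r u * P u j)" for j
  have G'inv': "mmul r (mmul c B' G') B' i j = B' i j" for i j using G'inv by simp
  have BP: "(\<Sum>u<c. B' i u * P u j) = B' i j" for i j
  proof -
    have "(\<Sum>u<c. B' i u * P u j) = mmul r (mmul c B' G') B' i j"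
      unfolding P_def mmul_def by (rule swap_helper[symmetric])
    thus ?thesis using G'inv' by simp
  qed
  have G'r: "G' u t = 0" if "t \<ge> r" for u t using G'm that by (simp add: mats_def)
  have G'c: "G' u t = 0" if "u \<ge> c" for u t using G'm that by (simp add: mats_def)
  have Bc: "B i j = 0" if "j \<ge> c" for i j using Bm that by (simp add: mats_def)
  have Br: "B i j = 0" if "i \<ge> Suc r" for i j using Bm that by (simp add: mats_def)
  have B'c: "B' i j = 0" if "j \<ge> c" for i j using B'm that by (simp add: mats_def)
  have Pc: "P u j = 0" if "u \<ge> c" for u j unfolding P_def mmul_def using G'c[OF that] by simp
  have Pc2: "P u j = 0" if "j \<ge> c" for u j unfolding P_def mmul_def using B'c[OF that] by simp
  have lastsplit: "(\<Sum>t<Suc r. K t * B t j) = (\<Sum>t<r. K t * B' t j) + K r * B r j" for K j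
  proof -
    have "(\<Sum>t<r. K t * B' t j) = (\<Sum>t<r. K t * B t j)"
      by (intro sum.cong refl) (simp add: B'_def)
    thus ?thesis by simp
  qed
  have mmS: "mmul (Suc r) K B i j = (\<Sum>t<r. K i t * B' t j) + K i r * B r j" for K i j
    unfolding mmul_def[of "Suc r"] by (rule lastsplit)
  show ?case
  proof (cases "\<forall>j. \<beta>' j = 0")
    case True
    have K0: "mmul c B G' i r = 0" for i unfolding mmul_def using G'r by simp
    have "mmul (Suc r) (mmul c B G') B = B"
    proof (intro ext)
      fix i j
      have "mmul (Suc r) (mmul c B G') B i j = (\<Sum>t<r. mmul c B G' i t * B' t j)"
        using mmS[of "mmul c B G'" i j] K0[of i] by simp
      also have "\<dots> = B i j"
      proof (cases "i < r")
        case True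
        have "(\<Sum>t<r. mmul c B G' i t * B' t j) = mmul r (mmul c B' G') B' i j"
          unfolding mmul_def using True by (simp add: B'_def)
        also have "\<dots> = B' i j" by (rule G'inv')
        also have "\<dots> = B i j" using True by (simp add: B'_def)
        finally show ?thesis .
      next
        case False
        show ?thesis
        proof (cases "i = r")
          case ir: True
          have "(\<Sum>t<r. mmul c B G' i t * B' t j) = (\<Sum>u<c. B r u * P u j)"
            unfolding mmul_def P_def ir by (rule swap_helper)
          also have "\<dots> = B r j"
            using True[rule_format, of j] unfolding \<beta>'_def right_minus_eq by (rule sym)
          finally show ?thesis using ir by simp
        next
          case False
          hence "i \<ge> Suc r" using \<open>\<not> i < r\<close> by simp
          thus ?thesis unfolding mmul_def using Br by simp
        qed
      qed
      finally show "mmul (Suc r) (mmul c B G') B i j = B i j" .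
    qed
    moreover have "G' \<in> mats c (Suc r)" using G'm by (auto simp: mats_def)
    ultimately show ?thesis by blast
  next
    case False
    then obtain j0 where j0: "\<beta>' j0 \<noteq> 0" by blast
    have j0c: "j0 < c"
    proof (rule ccontr)
      assume "\<not> j0 < c"
      hence "\<beta>' j0 = 0" using Bc Pc2 by (simp add: \<beta>'_def)
      thus False using j0 by simp
    qed
    define v where "v u = ((if u = j0 then 1 else 0) - P u j0) / \<beta>' j0" for u
    have vc: "v u = 0" if "u \<ge> c" for u using that j0c Pc[OF that] by (simp add: v_def)
    have delta: "(\<Sum>u<c. a u * (if u = j0 then 1 else 0)) = a j0" for a :: "nat \<Rightarrow> 'f"
    proof -
      have "(\<Sum>u<c. a u * (if u = j0 then 1 else 0)) = (\<Sum>u<c. if u = j0 then a j0 else 0)"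
        by (intro sum.cong refl) simp
      also have "\<dots> = a j0" using j0c by simp
      finally show ?thesis .
    qed
    have vsum: "(\<Sum>u<c. a u * v u) = (a j0 - (\<Sum>u<c. a u * P u j0)) / \<beta>' j0" for a :: "nat \<Rightarrow> 'f"
    proof -
      have "(\<Sum>u<c. a u * v u) = (\<Sum>u<c. (a u * (if u = j0 then 1 else 0) - a u * P u j0) / \<beta>' j0)"
        by (intro sum.cong refl) (simp add: v_def right_diff_distrib)
      also have "\<dots> = ((\<Sum>u<c. a u * (if u = j0 then 1 else 0)) - (\<Sum>u<c. a u * P u j0)) / \<beta>' j0"
        by (simp add: sum_divide_distrib[symmetric] sum_subtractf)
      also have "\<dots> = (a j0 - (\<Sum>u<c. a u * P u j0)) / \<beta>' j0" by (simp only: delta)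
      finally show ?thesis .
    qed
    have v1: "(\<Sum>u<c. B' i u * v u) = 0" for i
      using vsum[of "B' i"] BP[of i j0] by simp
    have v2: "(\<Sum>u<c. B r u * v u) = 1"
      using vsum[of "B r"] j0 by (simp add: \<beta>'_def)
    define \<gamma> where "\<gamma> t = (\<Sum>w<c. B r w * G' w t)" for t
    define G where "G u t = (if t < r then G' u t - v u * \<gamma> t else if t = r then v u else 0)" for u t
    have Gm: "G \<in> mats c (Suc r)"
      unfolding mats_def G_def using G'c vc by auto
    have K1: "mmul c B G i t = mmul c B' G' i t" if "i < r" "t < r" for i t
    proof -
      have "mmul c B G i t = (\<Sum>u<c. B' i u * G' u t - B' i u * v u * \<gamma> t)"
        unfolding mmul_def G_def using that
        by (intro sum.cong refl) (simp add: B'_def right_diff_distrib mult.assoc)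
      also have "\<dots> = (\<Sum>u<c. B' i u * G' u t) - (\<Sum>u<c. B' i u * v u) * \<gamma> t"
        by (simp add: sum_subtractf sum_distrib_right)
      finally show ?thesis using v1 by (simp add: mmul_def)
    qed
    have K2: "mmul c B G i r = 0" if "i < r" for i
    proof -
      have "mmul c B G i r = (\<Sum>u<c. B' i u * v u)"
        unfolding mmul_def G_def using that by (intro sum.cong refl) (simp add: B'_def)
      thus ?thesis using v1 by simp
    qed
    have K3: "mmul c B G r t = 0" if "t < r" for t
    proof -
      have "mmul c B G r t = (\<Sum>u<c. B r u * G' u t - B r u * v u * \<gamma> t)"
        unfolding mmul_def G_def using that
        by (intro sum.cong refl) (simp add: right_diff_distrib mult.assoc)
      also have "\<dots> = \<gamma> t - (\<Sum>u<c. B r u * v u) * \<gamma> t"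
        by (simp add: sum_subtractf sum_distrib_right \<gamma>_def)
      finally show ?thesis using v2 by simp
    qed
    have K4: "mmul c B G r r = 1"
    proof -
      have "mmul c B G r r = (\<Sum>u<c. B r u * v u)"
        unfolding mmul_def G_def by simp
      thus ?thesis using v2 by simp
    qed
    have K5: "mmul c B G i t = 0" if "i \<ge> Suc r" for i t
      unfolding mmul_def using Br[OF that] by simp
    have "mmul (Suc r) (mmul c B G) B = B"
    proof (intro ext)
      fix i j
      have eq: "mmul (Suc r) (mmul c B G) B i j = (\<Sum>t<r. mmul c B G i t * B' t j) + mmul c B G i r * B r j"
        by (rule mmS)
      show "mmul (Suc r) (mmul c B G) B i j = B i j"
      proof (cases "i < r")
        case True
        have "(\<Sum>t<r. mmul c B G i t * B' t j) = (\<Sum>t<r. mmul c B' G' i t * B' t j)"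
          by (intro sum.cong refl) (simp add: K1[OF True])
        also have "\<dots> = mmul r (mmul c B' G') B' i j" by (simp add: mmul_def[of r])
        also have "\<dots> = B' i j" by (rule G'inv')
        finally show ?thesis using eq K2[OF True] True by (simp add: B'_def)
      next
        case False
        show ?thesis
        proof (cases "i = r")
          case True
          have "(\<Sum>t<r. mmul c B G i t * B' t j) = 0" using K3 True by simp
          thus ?thesis using eq K4 True by simp
        next
          case False
          hence "i \<ge> Suc r" using \<open>\<not> i < r\<close> by simp
          thus ?thesis using eq K5 Br by simp
        qed
      qed
    qed
    thus ?thesis using Gm by blast
  qed
qed

locale core_ctx = addchar \<psi> for \<psi> :: "'f::{finite,field} \<Rightarrow> 'k::field_char_0" +
  fixes e :: "'f fmat \<Rightarrow> 'f fmat \<Rightarrow> 'k" and n m :: nat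
  assumes H2: "\<And>a X Y'. a \<in> mats n n \<Longrightarrow> X \<in> mats n m \<Longrightarrow> Y' \<in> mats n m \<Longrightarrow>
     e Y' (mmul n a X) = (\<Sum>Y\<in>{Y \<in> mats n m. mmul n a Y = Y'}. e Y X)"
begin

definition ehat :: "'f fmat \<Rightarrow> 'f fmat \<Rightarrow> 'k" where
  "ehat X B = (\<Sum>Y\<in>mats n m. e Y X * \<psi> (tr2 m n B Y))"

lemma L1:
  assumes a: "a \<in> mats n n" and X: "X \<in> mats n m"
  shows "ehat (mmul n a X) B = ehat X (mmul n B a)"
proof -
  have img: "mmul n a ` mats n m \<subseteq> mats n m" using a by (auto intro: mmul_mats)
  have "ehat (mmul n a X) B = (\<Sum>Y'\<in>mats n m. (\<Sum>Y\<in>{Y \<in> mats n m. mmul n a Y = Y'}. e Y X) * \<psi> (tr2 m n B Y'))"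
    unfolding ehat_def by (intro sum.cong refl) (simp add: H2[OF a X])
  also have "\<dots> = (\<Sum>Y'\<in>mats n m. (\<Sum>Y\<in>{Y \<in> mats n m. mmul n a Y = Y'}. e Y X * \<psi> (tr2 m n B (mmul n a Y))))"
    by (intro sum.cong refl) (auto simp: sum_distrib_right)
  also have "\<dots> = (\<Sum>Y\<in>mats n m. e Y X * \<psi> (tr2 m n B (mmul n a Y)))"
    by (rule sum.group[OF finite_mats finite_mats img])
  also have "\<dots> = ehat X (mmul n B a)"
    unfolding ehat_def by (simp add: tr2_assoc)
  finally show ?thesis .
qed

lemma supp:
  assumes X: "X \<in> mats n m" and Y: "Y \<in> mats n m" and nz: "e Y X \<noteq> 0"
    and dX: "\<And>l. (\<Sum>j<n. d j * X j l) = 0"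
  shows "(\<Sum>j<n. d j * Y j ll) = 0"
proof (rule ccontr)
  assume s: "(\<Sum>j<n. d j * Y j ll) \<noteq> 0"
  then obtain j0 where j0: "j0 < n" "d j0 \<noteq> 0"
    by (metis (mono_tags, lifting) lessThan_iff mult_eq_0_iff sum.neutral)
  define a where "a = (\<lambda>i j. if i < n \<and> j < n then (if i = j then 1 else 0) - (if i = j0 then d j / d j0 else 0) else (0::'f))"
  have am: "a \<in> mats n n" by (auto simp: mats_def a_def)
  have arow: "(\<Sum>j<n. a i j * Z j l) = Z i l - (\<Sum>j<n. d j * Z j l) / d j0" if "i = j0" for i Z l
  proof -
    have "(\<Sum>j<n. a i j * Z j l) = (\<Sum>j<n. (if i = j then Z j l else 0) - d j * Z j l / d j0)"
      using that j0 by (intro sum.cong refl) (auto simp: a_def left_diff_distrib)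
    also have "\<dots> = Z i l - (\<Sum>j<n. d j * Z j l) / d j0"
      using that j0 by (simp add: sum_subtractf sum_divide_distrib)
    finally show ?thesis .
  qed
  have arow2: "(\<Sum>j<n. a i j * Z j l) = Z i l" if "i < n" "i \<noteq> j0" for Z i l
  proof -
    have "(\<Sum>j<n. a i j * Z j l) = (\<Sum>j<n. if i = j then Z j l else 0)"
      using that by (intro sum.cong refl) (auto simp: a_def)
    also have "\<dots> = Z i l" using that by simp
    finally show ?thesis .
  qed
  have aX: "mmul n a X = X"
  proof (intro ext)
    fix i l
    show "mmul n a X i l = X i l"
    proof (cases "i < n")
      case True
      thus ?thesis unfolding mmul_def using arow[of i X l] arow2[of i X l] dX[of l] by (cases "i = j0") auto
    next
      case False
      thus ?thesis using X by (simp add: mmul_def a_def mats_def)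
    qed
  qed
  have dZ: "(\<Sum>i<n. d i * mmul n a Z i l) = 0" for Z l
  proof -
    have "(\<Sum>i<n. d i * mmul n a Z i l) = (\<Sum>i<n. d i * Z i l - (if i = j0 then d j0 * (\<Sum>j<n. d j * Z j l) / d j0 else 0))"
    proof (intro sum.cong refl)
      fix i assume i: "i \<in> {..<n}"
      show "d i * mmul n a Z i l = d i * Z i l - (if i = j0 then d j0 * (\<Sum>j<n. d j * Z j l) / d j0 else 0)"
        unfolding mmul_def using arow[of i Z l] arow2[of i Z l] i
        by (cases "i = j0") (auto simp: right_diff_distrib)
    qed
    also have "\<dots> = 0" using j0 by (simp add: sum_subtractf)
    finally show ?thesis .
  qed
  have E: "{Z \<in> mats n m. mmul n a Z = Y} = {}"
  proof (rule ccontr)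
    assume "{Z \<in> mats n m. mmul n a Z = Y} \<noteq> {}"
    then obtain Z where "mmul n a Z = Y" by blast
    hence "(\<Sum>j<n. d j * Y j ll) = 0" using dZ[of Z ll] by simp
    thus False using s by simp
  qed
  have "e Y (mmul n a X) = (\<Sum>Z\<in>{Z \<in> mats n m. mmul n a Z = Y}. e Z X)" by (rule H2[OF am X Y])
  also have "\<dots> = 0" unfolding E by simp
  finally show False using aX nz by simp
qed

lemma L2:
  assumes X: "X \<in> mats n m" and B: "B \<in> mats m n" and B': "B' \<in> mats m n"
    and eq: "mmul n B X = mmul n B' X"
  shows "ehat X B = ehat X B'"
  unfolding ehat_def
proof (intro sum.cong refl)
  fix Y :: "'f fmat" assume Y: "Y \<in> mats n m"
  show "e Y X * \<psi> (tr2 m n B Y) = e Y X * \<psi> (tr2 m n B' Y)"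
  proof (cases "e Y X = 0")
    case True
    thus ?thesis by simp
  next
    case False
    have inner: "(\<Sum>j<n. (B i j - B' i j) * Y j i) = 0" for i
    proof -
      have "(\<Sum>j<n. (B i j - B' i j) * X j l) = 0" for l
      proof -
        have "(\<Sum>j<n. (B i j - B' i j) * X j l) = mmul n B X i l - mmul n B' X i l"
          by (simp add: mmul_def left_diff_distrib sum_subtractf)
        thus ?thesis using eq by simp
      qed
      thus ?thesis using supp[OF X Y False, where d = "\<lambda>j. B i j - B' i j" and ll = i] by blast
    qed
    have "tr2 m n (\<lambda>i j. B i j - B' i j) Y = 0"
      unfolding tr2_def by (simp add: inner)
    hence "tr2 m n B Y = tr2 m n B' Y" by (simp add: tr2_diff_left)
    thus ?thesis by simp
  qed
qed

lemma Cross: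
  assumes X: "X \<in> mats n m" and X': "X' \<in> mats n m" and B: "B \<in> mats m n" and B': "B' \<in> mats m n"
    and eq: "mmul n B X = mmul n B' X'"
  shows "ehat X B = ehat X' B'"
proof -
  obtain G where G: "G \<in> mats n m" and GI: "mmul m (mmul n B G) B = B"
    using gen_inverse[OF B] by blast
  define a where "a = mmul m G B"
  define a' where "a' = mmul m G B'"
  have am: "a \<in> mats n n" unfolding a_def using G B by (rule mmul_mats)
  have a'm: "a' \<in> mats n n" unfolding a'_def using G B' by (rule mmul_mats)
  have Ba: "mmul n B a = B" unfolding a_def using GI by (simp add: mmul_assoc)
  have "ehat X B = ehat X (mmul n B a)" using Ba by simp
  also have "\<dots> = ehat (mmul n a X) B" using L1[OF am X] by simp
  finally have 1: "ehat X B = ehat (mmul n a X) B" .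
  have "mmul n (mmul n B a') X' = mmul n B (mmul m G (mmul n B' X'))"
    unfolding a'_def by (simp add: mmul_assoc)
  also have "\<dots> = mmul n B (mmul m G (mmul n B X))" using eq by simp
  also have "\<dots> = mmul n (mmul n B a) X" unfolding a_def by (simp add: mmul_assoc)
  also have "\<dots> = mmul n B' X'" using Ba eq by simp
  finally have "mmul n (mmul n B a') X' = mmul n B' X'" .
  hence "ehat X' B' = ehat X' (mmul n B a')"
    using L2[OF X' B' mmul_mats[OF B a'm]] by simp
  also have "\<dots> = ehat (mmul n a' X') B" using L1[OF a'm X'] by simp
  finally have 2: "ehat X' B' = ehat (mmul n a' X') B" .
  have "mmul n a X = mmul n a' X'"
    unfolding a_def a'_def using eq by (simp add: mmul_assoc)
  thus ?thesis using 1 2 by simp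
qed

definition F :: "'f fmat \<Rightarrow> 'k" where
  "F D = (if \<exists>p. fst p \<in> mats m n \<and> snd p \<in> mats n m \<and> mmul n (fst p) (snd p) = D
          then ehat (snd (SOME p. fst p \<in> mats m n \<and> snd p \<in> mats n m \<and> mmul n (fst p) (snd p) = D))
                    (fst (SOME p. fst p \<in> mats m n \<and> snd p \<in> mats n m \<and> mmul n (fst p) (snd p) = D))
          else 0)"

lemma F_eq:
  assumes B: "B \<in> mats m n" and X: "X \<in> mats n m"
  shows "F (mmul n B X) = ehat X B"
proof -
  let ?P = "\<lambda>p. fst p \<in> mats m n \<and> snd p \<in> mats n m \<and> mmul n (fst p) (snd p) = mmul n B X"
  have ex: "\<exists>p. ?P p" using B X by (intro exI[of _ "(B, X)"]) simp
  hence P: "?P (SOME p. ?P p)" by (rule someI_ex)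
  have "F (mmul n B X) = ehat (snd (SOME p. ?P p)) (fst (SOME p. ?P p))"
    unfolding F_def using ex by simp
  also have "\<dots> = ehat X B"
    using P Cross[of "snd (SOME p. ?P p)" X "fst (SOME p. ?P p)" B] B X by simp
  finally show ?thesis .
qed

definition bsol :: "'f fmat \<Rightarrow> 'k" where
  "bsol c = (\<Sum>A\<in>mats m m. F A * \<psi> (- tr2 m m A c)) / of_nat (card (mats m m :: 'f fmat set))"

lemma bsol_fourier:
  assumes D: "D \<in> mats m m"
  shows "(\<Sum>c\<in>mats m m. bsol c * \<psi> (tr2 m m D c)) = F D"
proof -
  let ?N = "of_nat (card (mats m m :: 'f fmat set)) :: 'k"
  have N0: "?N \<noteq> 0" using card_mats_pos[where 'f='f, of m m] by simp
  have step: "bsol c * \<psi> (tr2 m m D c) = (\<Sum>A\<in>mats m m. F A * \<psi> (tr2 m m (\<lambda>i j. D i j - A i j) c)) / ?N" for c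
  proof -
    have "(\<Sum>A\<in>mats m m. F A * \<psi> (- tr2 m m A c)) * \<psi> (tr2 m m D c) =
          (\<Sum>A\<in>mats m m. F A * \<psi> (tr2 m m (\<lambda>i j. D i j - A i j) c))"
      unfolding sum_distrib_right
    proof (intro sum.cong refl)
      fix A
      have "\<psi> (tr2 m m (\<lambda>i j. D i j - A i j) c) = \<psi> (tr2 m m D c) * \<psi> (- tr2 m m A c)"
        by (simp add: tr2_diff_left psi_diff)
      thus "F A * \<psi> (- tr2 m m A c) * \<psi> (tr2 m m D c) = F A * \<psi> (tr2 m m (\<lambda>i j. D i j - A i j) c)"
        by (simp add: mult.commute mult.left_commute)
    qed
    thus ?thesis unfolding bsol_def by simp
  qed
  have "(\<Sum>c\<in>mats m m. bsol c * \<psi> (tr2 m m D c)) =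
        (\<Sum>c\<in>mats m m. \<Sum>A\<in>mats m m. F A * \<psi> (tr2 m m (\<lambda>i j. D i j - A i j) c)) / ?N"
    by (simp only: step sum_divide_distrib)
  also have "\<dots> = (\<Sum>A\<in>mats m m. F A * (\<Sum>c\<in>mats m m. \<psi> (tr2 m m (\<lambda>i j. D i j - A i j) c))) / ?N"
    by (subst sum.swap) (simp add: sum_distrib_left)
  also have "\<dots> = (\<Sum>A\<in>mats m m. if A = D then F A * ?N else 0) / ?N"
  proof -
    have "(\<Sum>A\<in>mats m m. F A * (\<Sum>c\<in>mats m m. \<psi> (tr2 m m (\<lambda>i j. D i j - A i j) c))) =
          (\<Sum>A\<in>mats m m. if A = D then F A * ?N else 0)"
    proof (intro sum.cong refl)
      fix A :: "'f fmat" assume A: "A \<in> mats m m"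
      have Zm: "(\<lambda>i j. D i j - A i j) \<in> mats m m" using A D by (auto simp: mats_def)
      have eqz: "((\<lambda>i j. D i j - A i j) = (\<lambda>_ _. 0)) \<longleftrightarrow> A = D" by (auto simp: fun_eq_iff)
      show "F A * (\<Sum>c\<in>mats m m. \<psi> (tr2 m m (\<lambda>i j. D i j - A i j) c)) = (if A = D then F A * ?N else 0)"
        using orth_right[OF Zm] eqz by simp
    qed
    thus ?thesis by simp
  qed
  also have "\<dots> = F D" using D N0 by (simp add: finite_mats)
  finally show ?thesis .
qed

lemma core_main:
  assumes X: "X \<in> mats n m" and Y: "Y \<in> mats n m"
  shows "e Y X = (\<Sum>c\<in>{c \<in> mats m m. mmul m X c = Y}. bsol c)"
proof -
  define g where "g Y = (\<Sum>c\<in>{c \<in> mats m m. mmul m X c = Y}. bsol c) - e Y X" for Y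
  have "g Y = 0"
  proof (rule fourier_inj[OF _ Y])
    fix B :: "'f fmat" assume B: "B \<in> mats m n"
    have img: "mmul m X ` mats m m \<subseteq> mats n m" using X by (auto intro: mmul_mats)
    have "(\<Sum>Y\<in>mats n m. (\<Sum>c\<in>{c \<in> mats m m. mmul m X c = Y}. bsol c) * \<psi> (tr2 m n B Y)) =
          (\<Sum>Y\<in>mats n m. \<Sum>c\<in>{c \<in> mats m m. mmul m X c = Y}. bsol c * \<psi> (tr2 m n B (mmul m X c)))"
      by (intro sum.cong refl) (auto simp: sum_distrib_right)
    also have "\<dots> = (\<Sum>c\<in>mats m m. bsol c * \<psi> (tr2 m n B (mmul m X c)))"
      by (rule sum.group[OF finite_mats finite_mats img])
    also have "\<dots> = (\<Sum>c\<in>mats m m. bsol c * \<psi> (tr2 m m (mmul n B X) c))"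
      by (simp add: tr2_assoc)
    also have "\<dots> = F (mmul n B X)" by (rule bsol_fourier[OF mmul_mats[OF B X]])
    also have "\<dots> = ehat X B" by (rule F_eq[OF B X])
    finally have "(\<Sum>Y\<in>mats n m. (\<Sum>c\<in>{c \<in> mats m m. mmul m X c = Y}. bsol c) * \<psi> (tr2 m n B Y)) = ehat X B" .
    thus "(\<Sum>Y\<in>mats n m. g Y * \<psi> (tr2 m n B Y)) = 0"
      unfolding g_def ehat_def by (simp add: left_diff_distrib sum_subtractf)
  qed
  thus ?thesis by (simp add: g_def)
qed

end

lemma core2:
  fixes e :: "'f::{finite,field} fmat \<Rightarrow> 'f fmat \<Rightarrow> 'k::field_char_0"
  assumes ac: "alg_closed TYPE('k)"
  assumes H2: "\<And>a X Y'. a \<in> mats n n \<Longrightarrow> X \<in> mats n m \<Longrightarrow> Y' \<in> mats n m \<Longrightarrow>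
     e Y' (mmul n a X) = (\<Sum>Y\<in>{Y \<in> mats n m. mmul n a Y = Y'}. e Y X)"
  shows "\<exists>b. \<forall>X\<in>mats n m. \<forall>Y\<in>mats n m. e Y X = (\<Sum>c\<in>{c \<in> mats m m. mmul m X c = Y}. b c)"
proof -
  obtain \<psi> :: "'f \<Rightarrow> 'k" where psi: "\<forall>x y. \<psi> (x + y) = \<psi> x * \<psi> y" "\<psi> 0 = 1" "\<exists>t. \<psi> t \<noteq> 1"
    using exists_char[OF ac] by blast
  interpret core_ctx \<psi> e n m
    by unfold_locales (use psi H2 in auto)
  show ?thesis using core_main by blast
qed

definition tp :: "'a fmat \<Rightarrow> 'a fmat" where "tp A = (\<lambda>i j. A j i)"

lemma tp_tp [simp]: "tp (tp A) = A" by (simp add: tp_def)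

lemma tp_mats [simp]: "tp A \<in> mats c r \<longleftrightarrow> A \<in> mats r c"
  by (auto simp: tp_def mats_def)

lemma tp_mmul: "tp (mmul l A B) = mmul l (tp B) (tp (A::'f::comm_semiring_0 fmat))"
  by (simp add: tp_def mmul_def mult.commute)

lemma tp_inj: "tp A = tp B \<longleftrightarrow> A = B"
  by (metis tp_tp)

lemma inj_tp: "inj_on tp S"
  by (auto intro: inj_onI simp: tp_inj)

lemma sum_tp: "(\<Sum>Y\<in>A. f Y) = (\<Sum>Z\<in>tp ` A. f (tp Z))"
  by (simp add: sum.reindex[OF inj_tp] comp_def)

lemma core3:
  fixes e :: "'f::{finite,field} fmat \<Rightarrow> 'f fmat \<Rightarrow> 'k::field_char_0"
  assumes ac: "alg_closed TYPE('k)"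
  assumes H3: "\<And>b X Y'. b \<in> mats m m \<Longrightarrow> X \<in> mats n m \<Longrightarrow> Y' \<in> mats n m \<Longrightarrow>
     e Y' (mmul m X b) = (\<Sum>Y\<in>{Y \<in> mats n m. mmul m Y b = Y'}. e Y X)"
  shows "\<exists>w. \<forall>X\<in>mats n m. \<forall>Y\<in>mats n m. e Y X = (\<Sum>a\<in>{a \<in> mats n n. mmul n a X = Y}. w a)"
proof -
  define e' where "e' Y X = e (tp Y) (tp X)" for Y X
  have H2': "e' Y' (mmul m a X) = (\<Sum>Y\<in>{Y \<in> mats m n. mmul m a Y = Y'}. e' Y X)"
    if a: "a \<in> mats m m" and X: "X \<in> mats m n" and Y': "Y' \<in> mats m n" for a X Y'
  proof -
    have "e' Y' (mmul m a X) = e (tp Y') (mmul m (tp X) (tp a))"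
      by (simp add: e'_def tp_mmul)
    also have "\<dots> = (\<Sum>Y\<in>{Y \<in> mats n m. mmul m Y (tp a) = tp Y'}. e Y (tp X))"
      by (rule H3) (use a X Y' in auto)
    also have "{Y \<in> mats n m. mmul m Y (tp a) = tp Y'} = tp ` {Y \<in> mats m n. mmul m a Y = Y'}"
    proof (intro set_eqI iffI)
      fix Z assume "Z \<in> {Y \<in> mats n m. mmul m Y (tp a) = tp Y'}"
      hence Z: "Z \<in> mats n m" and Ze: "mmul m Z (tp a) = tp Y'" by auto
      have "tp (mmul m Z (tp a)) = Y'" using Ze by simp
      hence "tp Z \<in> mats m n" "mmul m a (tp Z) = Y'" using Z by (simp_all add: tp_mmul)
      thus "Z \<in> tp ` {Y \<in> mats m n. mmul m a Y = Y'}" by (intro image_eqI[of _ _ "tp Z"]) auto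
    next
      fix Z assume "Z \<in> tp ` {Y \<in> mats m n. mmul m a Y = Y'}"
      then obtain Y where "Y \<in> mats m n" "mmul m a Y = Y'" "Z = tp Y" by auto
      thus "Z \<in> {Y \<in> mats n m. mmul m Y (tp a) = tp Y'}" by (auto simp: tp_mmul)
    qed
    also have "(\<Sum>Y\<in>tp ` {Y \<in> mats m n. mmul m a Y = Y'}. e Y (tp X)) =
               (\<Sum>Y\<in>{Y \<in> mats m n. mmul m a Y = Y'}. e' Y X)"
      by (simp add: sum.reindex[OF inj_tp] e'_def)
    finally show ?thesis .
  qed
  obtain b where b: "\<forall>X\<in>mats m n. \<forall>Y\<in>mats m n. e' Y X = (\<Sum>c\<in>{c \<in> mats n n. mmul n X c = Y}. b c)"
    using core2[OF ac, of m n e'] H2' by blast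
  have "e Y X = (\<Sum>a\<in>{a \<in> mats n n. mmul n a X = Y}. b (tp a))"
    if X: "X \<in> mats n m" and Y: "Y \<in> mats n m" for X Y
  proof -
    have "e Y X = e' (tp Y) (tp X)" by (simp add: e'_def)
    also have "\<dots> = (\<Sum>c\<in>{c \<in> mats n n. mmul n (tp X) c = tp Y}. b c)"
      using b X Y by simp
    also have "{c \<in> mats n n. mmul n (tp X) c = tp Y} = tp ` {a \<in> mats n n. mmul n a X = Y}"
    proof (intro set_eqI iffI)
      fix c assume "c \<in> {c \<in> mats n n. mmul n (tp X) c = tp Y}"
      hence c: "c \<in> mats n n" and ce: "mmul n (tp X) c = tp Y" by auto
      have "tp (mmul n (tp X) c) = Y" using ce by simp
      hence "tp c \<in> mats n n" "mmul n (tp c) X = Y" using c by (simp_all add: tp_mmul)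
      thus "c \<in> tp ` {a \<in> mats n n. mmul n a X = Y}" by (intro image_eqI[of _ _ "tp c"]) auto
    next
      fix c assume "c \<in> tp ` {a \<in> mats n n. mmul n a X = Y}"
      then obtain a where "a \<in> mats n n" "mmul n a X = Y" "c = tp a" by auto
      thus "c \<in> {c \<in> mats n n. mmul n (tp X) c = tp Y}" by (auto simp: tp_mmul)
    qed
    also have "(\<Sum>c\<in>tp ` {a \<in> mats n n. mmul n a X = Y}. b c) = (\<Sum>a\<in>{a \<in> mats n n. mmul n a X = Y}. b (tp a))"
      by (simp add: sum.reindex[OF inj_tp])
    finally show ?thesis .
  qed
  thus ?thesis by blast
qed

lemma sum_ind: "finite S \<Longrightarrow> a \<in> S \<Longrightarrow> (\<Sum>x\<in>S. (if x = a then 1 else 0) * (f x::'a::comm_semiring_1)) = f a"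
proof -
  assume "finite S" "a \<in> S"
  have "(\<Sum>x\<in>S. (if x = a then 1 else 0) * f x) = (\<Sum>x\<in>S. if x = a then f a else 0)"
    by (intro sum.cong) auto
  thus ?thesis using \<open>finite S\<close> \<open>a \<in> S\<close> by simp
qed

lemma ecomp_lact_right:
  fixes E :: "'f::{finite,field} fmat \<Rightarrow> 'f fmat \<Rightarrow> 'k::field"
  assumes a: "a \<in> mats n n"
  shows "ecomp n m E (lact n m a) Y X = (if X \<in> mats n m then E Y (mmul n a X) else 0)"
proof (cases "X \<in> mats n m")
  case True
  have aX: "mmul n a X \<in> mats n m" using a True by (rule mmul_mats)
  have "ecomp n m E (lact n m a) Y X = (\<Sum>Z\<in>mats n m. if Z = mmul n a X then E Y Z else 0)"
    unfolding ecomp_def lact_def using True by (intro sum.cong refl) auto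
  also have "\<dots> = E Y (mmul n a X)" using aX by (simp add: finite_mats)
  finally show ?thesis using True by simp
qed (simp add: ecomp_def lact_def)

lemma ecomp_lact_left:
  fixes E :: "'f::{finite,field} fmat \<Rightarrow> 'f fmat \<Rightarrow> 'k::field"
  shows "ecomp n m (lact n m a) E Y X = (if Y \<in> mats n m then (\<Sum>Z\<in>{Z \<in> mats n m. mmul n a Z = Y}. E Z X) else 0)"
proof (cases "Y \<in> mats n m")
  case True
  have "ecomp n m (lact n m a) E Y X = (\<Sum>Z\<in>mats n m. if mmul n a Z = Y then E Z X else 0)"
    unfolding ecomp_def lact_def using True by (intro sum.cong refl) auto
  also have "\<dots> = (\<Sum>Z\<in>{Z \<in> mats n m. mmul n a Z = Y}. E Z X)"
    by (simp add: sum.inter_filter finite_mats)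
  finally show ?thesis using True by simp
qed (simp add: ecomp_def lact_def)

lemma ecomp_ract_right:
  fixes E :: "'f::{finite,field} fmat \<Rightarrow> 'f fmat \<Rightarrow> 'k::field"
  assumes b: "b \<in> mats m m"
  shows "ecomp n m E (ract n m b) Y X = (if X \<in> mats n m then E Y (mmul m X b) else 0)"
proof (cases "X \<in> mats n m")
  case True
  have Xb: "mmul m X b \<in> mats n m" using True b by (rule mmul_mats)
  have "ecomp n m E (ract n m b) Y X = (\<Sum>Z\<in>mats n m. if Z = mmul m X b then E Y Z else 0)"
    unfolding ecomp_def ract_def using True by (intro sum.cong refl) auto
  also have "\<dots> = E Y (mmul m X b)" using Xb by (simp add: finite_mats)
  finally show ?thesis using True by simp
qed (simp add: ecomp_def ract_def)

lemma ecomp_ract_left: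
  fixes E :: "'f::{finite,field} fmat \<Rightarrow> 'f fmat \<Rightarrow> 'k::field"
  shows "ecomp n m (ract n m b) E Y X = (if Y \<in> mats n m then (\<Sum>Z\<in>{Z \<in> mats n m. mmul m Z b = Y}. E Z X) else 0)"
proof (cases "Y \<in> mats n m")
  case True
  have "ecomp n m (ract n m b) E Y X = (\<Sum>Z\<in>mats n m. if mmul m Z b = Y then E Z X else 0)"
    unfolding ecomp_def ract_def using True by (intro sum.cong refl) auto
  also have "\<dots> = (\<Sum>Z\<in>{Z \<in> mats n m. mmul m Z b = Y}. E Z X)"
    by (simp add: sum.inter_filter finite_mats)
  finally show ?thesis using True by simp
qed (simp add: ecomp_def ract_def)

lemma ecomp_lin_left:
  "ecomp n m (\<lambda>Y X. \<Sum>i\<in>I. c i * G i Y X) E = (\<lambda>Y X. \<Sum>i\<in>I. c i * ecomp n m (G i) E Y X)"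
  unfolding ecomp_def
  by (intro ext) (simp add: sum_distrib_left sum_distrib_right mult.assoc; rule sum.swap)

lemma ecomp_lin_right:
  "ecomp n m E (\<lambda>Y X. \<Sum>i\<in>I. c i * G i Y X) = (\<lambda>Y X. \<Sum>i\<in>I. c i * ecomp n m E (G i) Y X)"
  unfolding ecomp_def
  by (intro ext) (simp add: sum_distrib_left mult.left_commute; rule sum.swap)

lemma commute_lr:
  assumes a: "a \<in> mats n n" and b: "b \<in> mats m m"
  shows "ecomp n m (ract n m b) (lact n m a) = (ecomp n m (lact n m a) (ract n m b) :: 'f::{finite,field} fmat \<Rightarrow> 'f fmat \<Rightarrow> 'k::field)"
proof (intro ext)
  fix Y X :: "'f fmat"
  have L: "ecomp n m (ract n m b) (lact n m a) Y X = (if X \<in> mats n m then ract n m b Y (mmul n a X) else 0)"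
    by (rule ecomp_lact_right[OF a])
  have R: "ecomp n m (lact n m a) (ract n m b) Y X =
        (if Y \<in> mats n m then (\<Sum>Z\<in>{Z \<in> mats n m. mmul n a Z = Y}. ract n m b Z X) else 0)"
    by (rule ecomp_lact_left)
  show "ecomp n m (ract n m b) (lact n m a) Y X = ecomp n m (lact n m a) (ract n m b) Y X"
  proof (cases "X \<in> mats n m \<and> Y \<in> mats n m")
    case True
    hence X: "X \<in> mats n m" and Y: "Y \<in> mats n m" by auto
    have Xb: "mmul m X b \<in> mats n m" using X b by (rule mmul_mats)
    have aX: "mmul n a X \<in> mats n m" using a X by (rule mmul_mats)
    have fin: "finite {Z \<in> mats n m. mmul n a Z = Y}" by (rule finite_subset[OF _ finite_mats]) auto
    have "(\<Sum>Z\<in>{Z \<in> mats n m. mmul n a Z = Y}. ract n m b Z X) =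
          (\<Sum>Z\<in>{Z \<in> mats n m. mmul n a Z = Y}. if Z = mmul m X b then 1 else 0)"
      by (intro sum.cong refl) (auto simp: ract_def X Y)
    also have "\<dots> = (if mmul m X b \<in> {Z \<in> mats n m. mmul n a Z = Y} then 1 else 0)"
      using fin by (rule sum.delta)
    also have "\<dots> = (if mmul n a (mmul m X b) = Y then 1 else 0)" using Xb by simp
    finally have S: "(\<Sum>Z\<in>{Z \<in> mats n m. mmul n a Z = Y}. ract n m b Z X) = (if mmul n a (mmul m X b) = Y then 1 else 0)" .
    have R': "ecomp n m (lact n m a) (ract n m b) Y X = (if mmul n a (mmul m X b) = Y then 1 else 0)"
      by (simp only: R if_P[OF Y] S)
    have "ecomp n m (ract n m b) (lact n m a) Y X = (if mmul m (mmul n a X) b = Y then 1 else 0)"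
      using L X Y aX by (simp add: ract_def)
    also have "mmul m (mmul n a X) b = mmul n a (mmul m X b)" by (rule mmul_assoc)
    finally have L': "ecomp n m (ract n m b) (lact n m a) Y X = (if mmul n a (mmul m X b) = Y then 1 else 0)" .
    show ?thesis by (simp only: L' R')
  next
    case False
    have L0: "ecomp n m (ract n m b) (lact n m a) Y X = 0"
    proof (cases "X \<in> mats n m")
      case True
      hence "Y \<notin> mats n m" using False by auto
      hence r0: "ract n m b Y (mmul n a X) = 0" by (simp add: ract_def)
      show ?thesis by (simp only: L if_P[OF True] r0)
    next
      case False
      thus ?thesis using L by simp
    qed
    have R0: "ecomp n m (lact n m a) (ract n m b) Y X = 0"
    proof (cases "Y \<in> mats n m")
      case True
      hence "X \<notin> mats n m" using False by auto
      hence s0: "(\<Sum>Z\<in>{Z \<in> mats n m. mmul n a Z = Y}. ract n m b Z X) = 0" by (simp add: ract_def)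
      show ?thesis by (simp only: R if_P[OF True] s0)
    next
      case False
      thus ?thesis using R by simp
    qed
    show ?thesis by (simp only: L0 R0)
  qed
qed

lemma lact_in_left:
  assumes a: "a \<in> mats n n"
  shows "lact n m a \<in> (left_image n m :: ('f::{finite,field} fmat \<Rightarrow> 'f fmat \<Rightarrow> 'k::field) set)"
proof -
  have eq: "lact n m a = (\<lambda>Y X. \<Sum>a'\<in>mats n n. (if a' = a then 1 else 0) * (lact n m a' Y X :: 'k))"
    using a by (intro ext) (simp add: finite_mats sum_ind)
  show ?thesis unfolding left_image_def mem_Collect_eq
    by (rule exI[where x = "\<lambda>a'. if a' = a then (1::'k) else 0"]) (use eq in simp)
qed

lemma ract_in_right:
  assumes b: "b \<in> mats m m"
  shows "ract n m b \<in> (right_image n m :: ('f::{finite,field} fmat \<Rightarrow> 'f fmat \<Rightarrow> 'k::field) set)"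
proof -
  have eq: "ract n m b = (\<lambda>Y X. \<Sum>b'\<in>mats m m. (if b' = b then 1 else 0) * (ract n m b' Y X :: 'k))"
    using b by (intro ext) (simp add: finite_mats sum_ind)
  show ?thesis unfolding right_image_def mem_Collect_eq
    by (rule exI[where x = "\<lambda>b'. if b' = b then (1::'k) else 0"]) (use eq in simp)
qed

lemma right_sub_cent:
  "right_image n m \<subseteq> centralizer n m (left_image n m :: ('f::{finite,field} fmat \<Rightarrow> 'f fmat \<Rightarrow> 'k::field) set)"
proof
  fix E :: "'f fmat \<Rightarrow> 'f fmat \<Rightarrow> 'k" assume "E \<in> right_image n m"
  then obtain c where E: "E = (\<lambda>Y X. \<Sum>b\<in>mats m m. c b * ract n m b Y X)" by (auto simp: right_image_def)
  have "E \<in> endos n m" unfolding E endos_def by (auto simp: ract_def)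
  moreover have "\<forall>G\<in>left_image n m. ecomp n m E G = ecomp n m G E"
  proof
    fix G :: "'f fmat \<Rightarrow> 'f fmat \<Rightarrow> 'k" assume "G \<in> left_image n m"
    then obtain d where G: "G = (\<lambda>Y X. \<Sum>a\<in>mats n n. d a * lact n m a Y X)" by (auto simp: left_image_def)
    have "ecomp n m E G = (\<lambda>Y X. \<Sum>b\<in>mats m m. c b * (\<Sum>a\<in>mats n n. d a * ecomp n m (ract n m b) (lact n m a) Y X))"
      unfolding G E by (simp add: ecomp_lin_left ecomp_lin_right)
    also have "\<dots> = (\<lambda>Y X. \<Sum>b\<in>mats m m. c b * (\<Sum>a\<in>mats n n. d a * ecomp n m (lact n m a) (ract n m b) Y X))"
      by (intro ext sum.cong refl arg_cong2[where f = "(*)"]) (simp_all add: commute_lr)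
    also have "\<dots> = (\<lambda>Y X. \<Sum>a\<in>mats n n. d a * (\<Sum>b\<in>mats m m. c b * ecomp n m (lact n m a) (ract n m b) Y X))"
      by (intro ext) (simp add: sum_distrib_left mult.left_commute; rule sum.swap)
    also have "\<dots> = ecomp n m G E"
      unfolding G E by (simp add: ecomp_lin_left ecomp_lin_right)
    finally show "ecomp n m E G = ecomp n m G E" .
  qed
  ultimately show "E \<in> centralizer n m (left_image n m)" by (simp add: centralizer_def)
qed

lemma left_sub_cent:
  "left_image n m \<subseteq> centralizer n m (right_image n m :: ('f::{finite,field} fmat \<Rightarrow> 'f fmat \<Rightarrow> 'k::field) set)"
proof
  fix E :: "'f fmat \<Rightarrow> 'f fmat \<Rightarrow> 'k" assume "E \<in> left_image n m"
  then obtain d where E: "E = (\<lambda>Y X. \<Sum>a\<in>mats n n. d a * lact n m a Y X)" by (auto simp: left_image_def)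
  have "E \<in> endos n m" unfolding E endos_def by (auto simp: lact_def)
  moreover have "\<forall>G\<in>right_image n m. ecomp n m E G = ecomp n m G E"
  proof
    fix G :: "'f fmat \<Rightarrow> 'f fmat \<Rightarrow> 'k" assume "G \<in> right_image n m"
    then obtain c where G: "G = (\<lambda>Y X. \<Sum>b\<in>mats m m. c b * ract n m b Y X)" by (auto simp: right_image_def)
    have "ecomp n m E G = (\<lambda>Y X. \<Sum>a\<in>mats n n. d a * (\<Sum>b\<in>mats m m. c b * ecomp n m (lact n m a) (ract n m b) Y X))"
      unfolding G E by (simp add: ecomp_lin_left ecomp_lin_right)
    also have "\<dots> = (\<lambda>Y X. \<Sum>a\<in>mats n n. d a * (\<Sum>b\<in>mats m m. c b * ecomp n m (ract n m b) (lact n m a) Y X))"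
      by (intro ext sum.cong refl arg_cong2[where f = "(*)"]) (simp_all add: commute_lr)
    also have "\<dots> = (\<lambda>Y X. \<Sum>b\<in>mats m m. c b * (\<Sum>a\<in>mats n n. d a * ecomp n m (ract n m b) (lact n m a) Y X))"
      by (intro ext) (simp add: sum_distrib_left mult.left_commute; rule sum.swap)
    also have "\<dots> = ecomp n m G E"
      unfolding G E by (simp add: ecomp_lin_left ecomp_lin_right)
    finally show "ecomp n m E G = ecomp n m G E" .
  qed
  ultimately show "E \<in> centralizer n m (right_image n m)" by (simp add: centralizer_def)
qed

lemma cent_sub_right:
  assumes ac: "alg_closed TYPE('k::field_char_0)"
  shows "centralizer n m (left_image n m :: ('f::{finite,field} fmat \<Rightarrow> 'f fmat \<Rightarrow> 'k) set) \<subseteq> right_image n m"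
proof
  fix E :: "'f fmat \<Rightarrow> 'f fmat \<Rightarrow> 'k" assume EC: "E \<in> centralizer n m (left_image n m)"
  hence Een: "E \<in> endos n m" and comm: "\<And>G. G \<in> left_image n m \<Longrightarrow> ecomp n m E G = ecomp n m G E"
    by (auto simp: centralizer_def)
  have H2: "E Y' (mmul n a X) = (\<Sum>Y\<in>{Y \<in> mats n m. mmul n a Y = Y'}. E Y X)"
    if a: "a \<in> mats n n" and X: "X \<in> mats n m" and Y': "Y' \<in> mats n m" for a X Y'
  proof -
    have "ecomp n m E (lact n m a) Y' X = ecomp n m (lact n m a) E Y' X"
      using comm[OF lact_in_left[OF a]] by simp
    thus ?thesis unfolding ecomp_lact_right[OF a] ecomp_lact_left using X Y' by simp
  qed
  obtain b where b: "\<forall>X\<in>mats n m. \<forall>Y\<in>mats n m. E Y X = (\<Sum>c\<in>{c \<in> mats m m. mmul m X c = Y}. b c)"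
    using core2[OF ac, of n m E] H2 by blast
  have "E = (\<lambda>Y X. \<Sum>c\<in>mats m m. b c * ract n m c Y X)"
  proof (intro ext)
    fix Y X
    show "E Y X = (\<Sum>c\<in>mats m m. b c * ract n m c Y X)"
    proof (cases "X \<in> mats n m \<and> Y \<in> mats n m")
      case True
      have "(\<Sum>c\<in>mats m m. b c * ract n m c Y X) = (\<Sum>c\<in>mats m m. if mmul m X c = Y then b c else 0)"
        using True by (intro sum.cong refl) (simp add: ract_def)
      also have "\<dots> = (\<Sum>c\<in>{c \<in> mats m m. mmul m X c = Y}. b c)"
        by (simp add: sum.inter_filter finite_mats)
      also have "\<dots> = E Y X" using b True by simp
      finally show ?thesis by simp
    next
      case False
      hence "E Y X = 0" using Een by (auto simp: endos_def)
      moreover have "(\<Sum>c\<in>mats m m. b c * ract n m c Y X) = 0" using False by (auto simp: ract_def)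
      ultimately show ?thesis by simp
    qed
  qed
  thus "E \<in> right_image n m" unfolding right_image_def by blast
qed

lemma cent_sub_left:
  assumes ac: "alg_closed TYPE('k::field_char_0)"
  shows "centralizer n m (right_image n m :: ('f::{finite,field} fmat \<Rightarrow> 'f fmat \<Rightarrow> 'k) set) \<subseteq> left_image n m"
proof
  fix E :: "'f fmat \<Rightarrow> 'f fmat \<Rightarrow> 'k" assume EC: "E \<in> centralizer n m (right_image n m)"
  hence Een: "E \<in> endos n m" and comm: "\<And>G. G \<in> right_image n m \<Longrightarrow> ecomp n m E G = ecomp n m G E"
    by (auto simp: centralizer_def)
  have H3: "E Y' (mmul m X b) = (\<Sum>Y\<in>{Y \<in> mats n m. mmul m Y b = Y'}. E Y X)"
    if b: "b \<in> mats m m" and X: "X \<in> mats n m" and Y': "Y' \<in> mats n m" for b X Y'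
  proof -
    have "ecomp n m E (ract n m b) Y' X = ecomp n m (ract n m b) E Y' X"
      using comm[OF ract_in_right[OF b]] by simp
    thus ?thesis unfolding ecomp_ract_right[OF b] ecomp_ract_left using X Y' by simp
  qed
  obtain w where w: "\<forall>X\<in>mats n m. \<forall>Y\<in>mats n m. E Y X = (\<Sum>a\<in>{a \<in> mats n n. mmul n a X = Y}. w a)"
    using core3[OF ac, of m n E] H3 by blast
  have "E = (\<lambda>Y X. \<Sum>a\<in>mats n n. w a * lact n m a Y X)"
  proof (intro ext)
    fix Y X
    show "E Y X = (\<Sum>a\<in>mats n n. w a * lact n m a Y X)"
    proof (cases "X \<in> mats n m \<and> Y \<in> mats n m")
      case True
      have "(\<Sum>a\<in>mats n n. w a * lact n m a Y X) = (\<Sum>a\<in>mats n n. if mmul n a X = Y then w a else 0)"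
        using True by (intro sum.cong refl) (simp add: lact_def)
      also have "\<dots> = (\<Sum>a\<in>{a \<in> mats n n. mmul n a X = Y}. w a)"
        by (simp add: sum.inter_filter finite_mats)
      also have "\<dots> = E Y X" using w True by simp
      finally show ?thesis by simp
    next
      case False
      hence "E Y X = 0" using Een by (auto simp: endos_def)
      moreover have "(\<Sum>a\<in>mats n n. w a * lact n m a Y X) = 0" using False by (auto simp: lact_def)
      ultimately show ?thesis by simp
    qed
  qed
  thus "E \<in> left_image n m" unfolding left_image_def by blast
qed

theorem theorem6p1:
  fixes n m :: nat
  assumes "alg_closed TYPE('k::field_char_0)"
  shows "centralizer n m (left_image n m :: ('f::{finite,field} fmat \<Rightarrow> 'f fmat \<Rightarrow> 'k) set)
           = right_image n m
       \<and> centralizer n m (right_image n m :: ('f fmat \<Rightarrow> 'f fmat \<Rightarrow> 'k) set)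
           = left_image n m"
  using cent_sub_right[OF assms] right_sub_cent cent_sub_left[OF assms] left_sub_cent
  by blast

end
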